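(* Every regainingly approximable number is speedable.
   Context: A real $x$ is regainingly approximable if there is a computable non-decreasing sequence of rationals $(x_n)_n$ converging to $x$ with $x - x_n < 2^{-n}$ for infinitely many $n\in\mathbb{N}$. A left-computable real $x$ (i.e. limit of a computable non-decreasing sequence of rationals) is speedable if there exist $\rho\in(0,1)$ and a computable strictly increasing sequence of rationals $(x_n)_n$ converging to $x$ such that $\frac{x-x_{n+1}}{x-x_n}\le\rho$ for infinitely many $n\in\mathbb{N}$. *)

theory Defs
  imports Complex_Main
begin

text \<open>Total computable (recursive) functions on natural numbers: the closure of the
basic functions (zero, successor, projections) under composition, primitive
recursion and minimisation of regular functions (Kleene).  recfn n f means that
f, applied to argument lists of length n, is a total recursive function of arity n.\<close>

inductive recfn :: "nat \<Rightarrow> (nat list \<Rightarrow> nat) \<Rightarrow> bool" where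
  rf_zero: "recfn n (\<lambda>xs. 0)"
| rf_succ: "recfn 1 (\<lambda>xs. Suc (hd xs))"
| rf_proj: "i < n \<Longrightarrow> recfn n (\<lambda>xs. xs ! i)"
| rf_comp: "recfn m f \<Longrightarrow> length gs = m \<Longrightarrow> (\<forall>g\<in>set gs. recfn n g)
            \<Longrightarrow> recfn n (\<lambda>xs. f (map (\<lambda>g. g xs) gs))"
| rf_prim: "recfn n f \<Longrightarrow> recfn (Suc (Suc n)) g
            \<Longrightarrow> recfn (Suc n) (\<lambda>xs. rec_nat (f (tl xs)) (\<lambda>y r. g (y # r # tl xs)) (hd xs))"
| rf_min: "recfn (Suc n) g \<Longrightarrow> (\<forall>xs. length xs = n \<longrightarrow> (\<exists>y. g (y # xs) = 0))
            \<Longrightarrow> recfn n (\<lambda>xs. LEAST y. g (y # xs) = 0)"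

definition computable_nat_fun :: "(nat \<Rightarrow> nat) \<Rightarrow> bool" where
  "computable_nat_fun f \<longleftrightarrow> (\<exists>F. recfn 1 F \<and> (\<forall>k. f k = F [k]))"

definition computable_rat_seq :: "(nat \<Rightarrow> rat) \<Rightarrow> bool" where
  "computable_rat_seq q \<longleftrightarrow> (\<exists>a b c. computable_nat_fun a \<and> computable_nat_fun b \<and>
      computable_nat_fun c \<and> (\<forall>n. q n = (of_nat (a n) - of_nat (b n)) / of_nat (c n + 1)))"

definition left_computable :: "real \<Rightarrow> bool" where
  "left_computable x \<longleftrightarrow> (\<exists>q. computable_rat_seq q \<and> mono q \<and>
      (\<lambda>n. real_of_rat (q n)) \<longlonglongrightarrow> x)"

definition regainingly_approximable :: "real \<Rightarrow> bool" where
  "regainingly_approximable x \<longleftrightarrow> (\<exists>q. computable_rat_seq q \<and> mono q \<and>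
      (\<lambda>n. real_of_rat (q n)) \<longlonglongrightarrow> x \<and>
      infinite {n. x - real_of_rat (q n) < 2 powi (- int n)})"

definition speedable :: "real \<Rightarrow> bool" where
  "speedable x \<longleftrightarrow> left_computable x \<and> (\<exists>\<rho> q. 0 < \<rho> \<and> \<rho> < 1 \<and>
      computable_rat_seq q \<and> strict_mono q \<and> (\<lambda>n. real_of_rat (q n)) \<longlonglongrightarrow> x \<and>
      infinite {n. (x - real_of_rat (q (Suc n))) / (x - real_of_rat (q n)) \<le> \<rho>})"

end

theory Submission
  imports Defs "HOL-Library.Infinite_Set"
begin

lemma rf_one0: "recfn 0 (\<lambda>xs. Suc 0)"
proof -
  have "recfn 0 (\<lambda>xs. (\<lambda>xs. Suc (hd xs)) (map (\<lambda>g. g xs) [\<lambda>xs. 0]))"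
    by (rule rf_comp[OF rf_succ]) (auto intro: rf_zero)
  then show ?thesis by simp
qed

lemma rf_add: "\<exists>A. recfn 2 A \<and> (\<forall>a b. A [a, b] = a + b)"
proof -
  have g: "recfn 3 (\<lambda>xs. (\<lambda>xs. Suc (hd xs)) (map (\<lambda>g. g xs) [\<lambda>xs. xs ! 1]))"
    by (rule rf_comp[OF rf_succ]) (auto intro: rf_proj)
  have f: "recfn 1 (\<lambda>xs. xs ! 0)" by (rule rf_proj) simp
  have "recfn (Suc (Suc 1)) (\<lambda>xs. (\<lambda>xs. Suc (hd xs)) (map (\<lambda>g. g xs) [\<lambda>xs. xs ! 1]))"
    using g by (simp add: numeral_eq_Suc)
  from rf_prim[OF f this] have "recfn 2 (\<lambda>xs. rec_nat (tl xs ! 0) (\<lambda>y r. Suc r) (hd xs))"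
    by (simp add: numeral_eq_Suc)
  moreover have "rec_nat b (\<lambda>y r. Suc r) a = a + b" for a b :: nat
    by (induction a) auto
  ultimately show ?thesis by (intro exI[of _ "\<lambda>xs. rec_nat (tl xs ! 0) (\<lambda>y r. Suc r) (hd xs)"]) auto
qed

lemma rf_mult: "\<exists>M. recfn 2 M \<and> (\<forall>a b. M [a, b] = a * b)"
proof -
  obtain A where A: "recfn 2 A" "\<And>a b. A [a, b] = a + b" using rf_add by blast
  have g: "recfn 3 (\<lambda>xs. A (map (\<lambda>g. g xs) [\<lambda>xs. xs ! 1, \<lambda>xs. xs ! 2]))"
    by (rule rf_comp[OF A(1)]) (auto intro: rf_proj)
  then have g': "recfn (Suc (Suc 1)) (\<lambda>xs. A (map (\<lambda>g. g xs) [\<lambda>xs. xs ! 1, \<lambda>xs. xs ! 2]))"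
    by (simp add: numeral_eq_Suc)
  from rf_prim[OF rf_zero g'] have "recfn 2 (\<lambda>xs. rec_nat 0 (\<lambda>y r. A [r, tl xs ! 0]) (hd xs))"
    by (simp add: numeral_eq_Suc)
  moreover have "rec_nat 0 (\<lambda>y r. A [r, b]) a = a * b" for a b :: nat
    by (induction a) (auto simp: A(2))
  ultimately show ?thesis by (intro exI[of _ "\<lambda>xs. rec_nat 0 (\<lambda>y r. A [r, tl xs ! 0]) (hd xs)"]) auto
qed

lemma comp_binop:
  assumes "recfn 2 H" "\<And>a b. H [a, b] = h a b"
    and "computable_nat_fun f" "computable_nat_fun g"
  shows "computable_nat_fun (\<lambda>k. h (f k) (g k))"
proof -
  obtain F where F: "recfn 1 F" "\<And>k. f k = F [k]" using assms(3) unfolding computable_nat_fun_def by blast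
  obtain G where G: "recfn 1 G" "\<And>k. g k = G [k]" using assms(4) unfolding computable_nat_fun_def by blast
  have "recfn 1 (\<lambda>xs. H (map (\<lambda>g. g xs) [F, G]))"
    using F(1) G(1) by (intro rf_comp[OF assms(1)]) auto
  then show ?thesis unfolding computable_nat_fun_def
    by (intro exI[of _ "\<lambda>xs. H (map (\<lambda>g. g xs) [F, G])"]) (simp add: assms(2) F G)
qed

lemma comp_add: "computable_nat_fun f \<Longrightarrow> computable_nat_fun g \<Longrightarrow> computable_nat_fun (\<lambda>k. f k + g k)"
  using rf_add comp_binop by blast

lemma comp_mult: "computable_nat_fun f \<Longrightarrow> computable_nat_fun g \<Longrightarrow> computable_nat_fun (\<lambda>k. f k * g k)"
  using rf_mult comp_binop by blast

lemma comp_comp: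
  assumes "computable_nat_fun f" "computable_nat_fun g"
  shows "computable_nat_fun (\<lambda>k. f (g k))"
proof -
  obtain F where F: "recfn 1 F" "\<And>k. f k = F [k]" using assms(1) unfolding computable_nat_fun_def by blast
  obtain G where G: "recfn 1 G" "\<And>k. g k = G [k]" using assms(2) unfolding computable_nat_fun_def by blast
  have "recfn 1 (\<lambda>xs. F (map (\<lambda>g. g xs) [G]))"
    using G(1) by (intro rf_comp[OF F(1)]) auto
  then show ?thesis unfolding computable_nat_fun_def
    by (intro exI[of _ "\<lambda>xs. F (map (\<lambda>g. g xs) [G])"]) (simp add: F G)
qed

lemma comp_id: "computable_nat_fun (\<lambda>k. k)"
  unfolding computable_nat_fun_def by (intro exI[of _ "\<lambda>xs. xs ! 0"]) (auto intro: rf_proj)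

lemma comp_suc: "computable_nat_fun Suc"
  unfolding computable_nat_fun_def by (intro exI[of _ "\<lambda>xs. Suc (hd xs)"]) (use rf_succ in auto)

lemma comp_pred: "computable_nat_fun (\<lambda>k. k - 1)"
proof -
  have g: "recfn (Suc (Suc 0)) (\<lambda>xs. xs ! 0)" by (rule rf_proj) simp
  from rf_prim[OF rf_zero g] have "recfn 1 (\<lambda>xs. rec_nat 0 (\<lambda>y r. y) (hd xs))" by simp
  moreover have "rec_nat 0 (\<lambda>y r. y) k = k - 1" for k :: nat by (cases k) auto
  ultimately show ?thesis unfolding computable_nat_fun_def
    by (intro exI[of _ "\<lambda>xs. rec_nat 0 (\<lambda>y r. y) (hd xs)"]) auto
qed

lemma comp_pow2: "computable_nat_fun (\<lambda>k. 2 ^ k)"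
proof -
  obtain A where A: "recfn 2 A" "\<And>a b. A [a, b] = a + b" using rf_add by blast
  have g: "recfn 2 (\<lambda>xs. A (map (\<lambda>g. g xs) [\<lambda>xs. xs ! 1, \<lambda>xs. xs ! 1]))"
    by (rule rf_comp[OF A(1)]) (auto intro: rf_proj)
  then have g': "recfn (Suc (Suc 0)) (\<lambda>xs. A (map (\<lambda>g. g xs) [\<lambda>xs. xs ! 1, \<lambda>xs. xs ! 1]))"
    by (simp add: numeral_eq_Suc)
  from rf_prim[OF rf_one0 g'] have "recfn 1 (\<lambda>xs. rec_nat (Suc 0) (\<lambda>y r. A [r, r]) (hd xs))"
    by simp
  moreover have "rec_nat (Suc 0) (\<lambda>y r. A [r, r]) k = 2 ^ k" for k :: nat
    by (induction k) (auto simp: A(2))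
  ultimately show ?thesis unfolding computable_nat_fun_def
    by (intro exI[of _ "\<lambda>xs. rec_nat (Suc 0) (\<lambda>y r. A [r, r]) (hd xs)"]) auto
qed

lemma comp_double: "computable_nat_fun (\<lambda>k. 2 * k)"
  using comp_add[OF comp_id comp_id] by (simp add: mult_2)

lemma shifted_computable:
  assumes "computable_rat_seq q"
  shows "computable_rat_seq (\<lambda>n. q (2 * n) - 1 / 2 ^ n)"
proof -
  obtain a b c where abc: "computable_nat_fun a" "computable_nat_fun b" "computable_nat_fun c"
    "\<And>n. q n = (of_nat (a n) - of_nat (b n)) / of_nat (c n + 1)"
    using assms unfolding computable_rat_seq_def by blast
  define A where "A n = 2 ^ n * a (2 * n)" for n
  define B where "B n = 2 ^ n * b (2 * n) + Suc (c (2 * n))" for n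
  define C where "C n = 2 ^ n * Suc (c (2 * n)) - 1" for n
  have a2: "computable_nat_fun (\<lambda>n. a (2 * n))" by (rule comp_comp[OF abc(1) comp_double])
  have b2: "computable_nat_fun (\<lambda>n. b (2 * n))" by (rule comp_comp[OF abc(2) comp_double])
  have c2: "computable_nat_fun (\<lambda>n. Suc (c (2 * n)))"
    by (rule comp_comp[OF comp_suc comp_comp[OF abc(3) comp_double]])
  have cA: "computable_nat_fun A" unfolding A_def[abs_def] by (rule comp_mult[OF comp_pow2 a2])
  have cB: "computable_nat_fun B" unfolding B_def[abs_def]
    by (rule comp_add[OF comp_mult[OF comp_pow2 b2] c2])
  have cC: "computable_nat_fun C" unfolding C_def[abs_def]
    by (rule comp_comp[OF comp_pred comp_mult[OF comp_pow2 c2]])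
  have eq: "q (2 * n) - 1 / 2 ^ n = (of_nat (A n) - of_nat (B n)) / of_nat (C n + 1)" for n
  proof -
    have pos: "(1::nat) \<le> 2 ^ n * Suc (c (2 * n))"
      by (metis One_nat_def Suc_leI mult_pos_pos zero_less_Suc zero_less_numeral zero_less_power)
    have "C n + 1 = 2 ^ n * Suc (c (2 * n))" unfolding C_def using pos by linarith
    then have "(of_nat (C n + 1) :: rat) = of_nat (2 ^ n * Suc (c (2 * n)))" by (simp only:)
    also have "\<dots> = 2 ^ n * (of_nat (c (2 * n)) + 1)" by (simp add: algebra_simps)
    finally have "(of_nat (C n + 1) :: rat) = 2 ^ n * (of_nat (c (2 * n)) + 1)" .
    moreover have "(of_nat (c (2 * n)) + 1 :: rat) \<noteq> 0"
      using of_nat_0_le_iff[of "c (2*n)", where 'a=rat] by linarith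
    ultimately show ?thesis unfolding abc(4) A_def B_def
      by (simp add: field_simps)
  qed
  show ?thesis unfolding computable_rat_seq_def
    using cA cB cC eq by blast
qed

theorem proposition5p2:
  fixes x :: real
  assumes "regainingly_approximable x"
  shows "speedable x"
proof -
  obtain q where q: "computable_rat_seq q" "mono q" "(\<lambda>n. real_of_rat (q n)) \<longlonglongrightarrow> x"
    "infinite {n. x - real_of_rat (q n) < 2 powi (- int n)}"
    using assms unfolding regainingly_approximable_def by blast
  have lc: "left_computable x" unfolding left_computable_def using q by blast
  define p where "p n = q (2 * n) - 1 / 2 ^ n" for n
  have cp: "computable_rat_seq p" unfolding p_def[abs_def] by (rule shifted_computable[OF q(1)])
  have inc: "incseq (\<lambda>n. real_of_rat (q n))"
    using q(2) unfolding mono_def incseq_def by (simp add: of_rat_less_eq)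
  have le: "real_of_rat (q n) \<le> x" for n by (rule incseq_le[OF inc q(3)])
  have monoq: "real_of_rat (q m) \<le> real_of_rat (q n)" if "m \<le> n" for m n
    using inc that unfolding incseq_def by blast
  have rp: "real_of_rat (p n) = real_of_rat (q (2 * n)) - (1/2) ^ n" for n
    unfolding p_def by (simp add: of_rat_diff of_rat_divide of_rat_power power_one_over)
  have sm: "strict_mono p"
  proof (rule strict_mono_Suc_iff[THEN iffD2], intro allI)
    fix n
    have "q (2 * n) \<le> q (2 * Suc n)" using q(2) unfolding mono_def by simp
    moreover have "1 / 2 ^ Suc n < (1 / 2 ^ n :: rat)" by (simp add: field_simps)
    ultimately show "p n < p (Suc n)" unfolding p_def by linarith
  qed
  have lim2: "(\<lambda>n. real_of_rat (q (2 * n))) \<longlonglongrightarrow> x"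
    using LIMSEQ_subseq_LIMSEQ[OF q(3), of "\<lambda>n. 2 * n"] by (simp add: strict_mono_def o_def)
  have limp: "(\<lambda>n. real_of_rat (p n)) \<longlonglongrightarrow> x"
    unfolding rp using tendsto_diff[OF lim2 LIMSEQ_power_zero[of "1/2::real"]] by simp
  have inf: "infinite {n. (x - real_of_rat (p (Suc n))) / (x - real_of_rat (p n)) \<le> 3/4}"
    unfolding infinite_nat_iff_unbounded_le
  proof
    fix N
    obtain m where m: "m \<ge> 2 * N + 4" "x - real_of_rat (q m) < 2 powi (- int m)"
      using q(4) unfolding infinite_nat_iff_unbounded_le by blast
    define n where "n = m div 2"
    have n2: "n \<ge> 2" "n \<ge> N" using m(1) unfolding n_def by auto
    have mn: "2 * n \<le> m" "m \<le> 2 * Suc n" unfolding n_def by auto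
    define e where "e = (1/2::real) ^ n"
    have e0: "0 < e" unfolding e_def by simp
    have e4: "e \<le> 1/4" unfolding e_def
      using power_decreasing[OF n2(1), of "1/2::real"] by (simp add: power2_eq_square)
    have pm: "(2::real) powi (- int m) = (1/2) ^ m"
      by (simp add: power_int_minus power_one_over inverse_eq_divide)
    have "(1/2::real) ^ m \<le> (1/2) ^ (2 * n)" by (rule power_decreasing[OF mn(1)]) auto
    also have "\<dots> = e * e" unfolding e_def by (metis power_mult mult.commute power2_eq_square)
    also have "\<dots> \<le> e * (1/4)" using e0 e4 by simp
    finally have em: "(1/2::real) ^ m \<le> e / 4" by simp
    have d1: "x - real_of_rat (q (2 * Suc n)) \<le> x - real_of_rat (q m)" using monoq[OF mn(2)] by simp
    have num: "x - real_of_rat (p (Suc n)) \<le> 3/4 * e"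
      using d1 m(2) em pm unfolding rp e_def by simp
    have den: "x - real_of_rat (p n) \<ge> e" unfolding rp e_def using le[of "2*n"] by simp
    have "(x - real_of_rat (p (Suc n))) / (x - real_of_rat (p n)) \<le> 3/4"
    proof -
      have dpos: "x - real_of_rat (p n) > 0" using den e0 by linarith
      have "x - real_of_rat (p (Suc n)) \<le> 3/4 * (x - real_of_rat (p n))" using num mult_left_mono[OF den, of "3/4"] by linarith
      then show ?thesis using dpos by (simp add: divide_le_eq)
    qed
    then show "\<exists>n\<ge>N. n \<in> {n. (x - real_of_rat (p (Suc n))) / (x - real_of_rat (p n)) \<le> 3/4}"
      using n2 by blast
  qed
  show ?thesis unfolding speedable_def
    using lc cp sm limp inf by (intro conjI exI[of _ "3/4::real"] exI[of _ p]) auto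
qed

end
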